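(* Let $G$ be a locally compact group acting on a topological space $X$. Let $(g_\alpha)$ be a net in $G$ converging to infinity, and assume that for some $x,y\in X$ the net $(g_\alpha x)$ converges to $y$. Then there exist a directed set $(\beta)$ and two nets $n,n':(\beta)\to G$ such that $n(\beta)x\to y$ and $n'(\beta)x\to y$ in $X$, and $n(\beta)^{-1}n'(\beta)\to\infty$ in $G$.
   Context: A net $(g_\alpha)$ in a locally compact space converges to infinity if for every compact $K$ there is $\alpha_0$ with $g_\alpha\notin K$ for all $\alpha\ge\alpha_0$. *)

theory Defs
  imports "HOL-Analysis.Analysis" "HOL-Algebra.Group"
begin

definition directed_set :: "'i set \<Rightarrow> ('i \<Rightarrow> 'i \<Rightarrow> bool) \<Rightarrow> bool" where
  "directed_set D r \<longleftrightarrow> D \<noteq> {} \<and> (\<forall>a\<in>D. r a a)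
     \<and> (\<forall>a\<in>D. \<forall>b\<in>D. \<forall>c\<in>D. r a b \<longrightarrow> r b c \<longrightarrow> r a c)
     \<and> (\<forall>a\<in>D. \<forall>b\<in>D. \<exists>c\<in>D. r a c \<and> r b c)"

definition net_converges ::
    "'x topology \<Rightarrow> 'i set \<Rightarrow> ('i \<Rightarrow> 'i \<Rightarrow> bool) \<Rightarrow> ('i \<Rightarrow> 'x) \<Rightarrow> 'x \<Rightarrow> bool" where
  "net_converges X D r f y \<longleftrightarrow> y \<in> topspace X \<and>
     (\<forall>U. openin X U \<and> y \<in> U \<longrightarrow> (\<exists>a0\<in>D. \<forall>a\<in>D. r a0 a \<longrightarrow> f a \<in> U))"

definition net_to_infinity ::
    "'g topology \<Rightarrow> 'i set \<Rightarrow> ('i \<Rightarrow> 'i \<Rightarrow> bool) \<Rightarrow> ('i \<Rightarrow> 'g) \<Rightarrow> bool" where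
  "net_to_infinity T D r f \<longleftrightarrow>
     (\<forall>K. compactin T K \<longrightarrow> (\<exists>a0\<in>D. \<forall>a\<in>D. r a0 a \<longrightarrow> f a \<notin> K))"

definition topological_group :: "('g, 'b) monoid_scheme \<Rightarrow> 'g topology \<Rightarrow> bool" where
  "topological_group G T \<longleftrightarrow> group G \<and> topspace T = carrier G
     \<and> continuous_map (prod_topology T T) T (\<lambda>(a, b). a \<otimes>\<^bsub>G\<^esub> b)
     \<and> continuous_map T T (\<lambda>a. inv\<^bsub>G\<^esub> a)"

definition locally_compact_group :: "('g, 'b) monoid_scheme \<Rightarrow> 'g topology \<Rightarrow> bool" where
  "locally_compact_group G T \<longleftrightarrow> topological_group G T \<and> locally_compact_space T"

definition continuous_action ::
    "('g, 'b) monoid_scheme \<Rightarrow> 'g topology \<Rightarrow> 'x topology \<Rightarrow> ('g \<Rightarrow> 'x \<Rightarrow> 'x) \<Rightarrow> bool" where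
  "continuous_action G T X act \<longleftrightarrow>
     (\<forall>g\<in>carrier G. \<forall>x\<in>topspace X. act g x \<in> topspace X)
     \<and> (\<forall>x\<in>topspace X. act \<one>\<^bsub>G\<^esub> x = x)
     \<and> (\<forall>g\<in>carrier G. \<forall>h\<in>carrier G. \<forall>x\<in>topspace X.
           act (g \<otimes>\<^bsub>G\<^esub> h) x = act g (act h x))
     \<and> continuous_map (prod_topology T X) X (\<lambda>(g, x). act g x)"

end

theory Submission
  imports Defs
begin

theorem lemma2p2:
  fixes G :: "('g, 'b) monoid_scheme" and T :: "'g topology" and X :: "'x topology"
    and act :: "'g \<Rightarrow> 'x \<Rightarrow> 'x"
    and D :: "'i set" and r :: "'i \<Rightarrow> 'i \<Rightarrow> bool" and g :: "'i \<Rightarrow> 'g"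
    and x y :: 'x
  assumes "locally_compact_group G T"
    and "continuous_action G T X act"
    and "directed_set D r"
    and "\<forall>a\<in>D. g a \<in> carrier G"
    and "net_to_infinity T D r g"
    and "x \<in> topspace X"
    and "net_converges X D r (\<lambda>a. act (g a) x) y"
  shows "\<exists>(E :: ('i \<times> 'g set) set) rE n n'.
           directed_set E rE
           \<and> (\<forall>b\<in>E. n b \<in> carrier G \<and> n' b \<in> carrier G)
           \<and> net_converges X E rE (\<lambda>b. act (n b) x) y
           \<and> net_converges X E rE (\<lambda>b. act (n' b) x) y
           \<and> net_to_infinity T E rE (\<lambda>b. inv\<^bsub>G\<^esub> (n b) \<otimes>\<^bsub>G\<^esub> n' b)"
proof -
  have grp: "group G" and top: "topspace T = carrier G"
    and mc: "continuous_map (prod_topology T T) T (\<lambda>(a, b). a \<otimes>\<^bsub>G\<^esub> b)"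
    using assms(1) unfolding locally_compact_group_def topological_group_def by auto
  have dir: "D \<noteq> {}" "\<And>a. a\<in>D \<Longrightarrow> r a a"
    "\<And>a b c. a\<in>D \<Longrightarrow> b\<in>D \<Longrightarrow> c\<in>D \<Longrightarrow> r a b \<Longrightarrow> r b c \<Longrightarrow> r a c"
    "\<And>a b. a\<in>D \<Longrightarrow> b\<in>D \<Longrightarrow> \<exists>c\<in>D. r a c \<and> r b c"
    using assms(3) unfolding directed_set_def by blast+
  have gc: "\<And>a. a \<in> D \<Longrightarrow> g a \<in> carrier G" using assms(4) by blast
  have key: "\<exists>a'. a' \<in> D \<and> r a a' \<and> inv\<^bsub>G\<^esub> (g a) \<otimes>\<^bsub>G\<^esub> g a' \<notin> K"
    if a: "a \<in> D" and K: "compactin T K" for a K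
  proof -
    have cm: "continuous_map T T (\<lambda>k. g a \<otimes>\<^bsub>G\<^esub> k)"
    proof -
      have "continuous_map T (prod_topology T T) (\<lambda>k. (g a, k))"
        using gc[OF a] top by (auto intro!: continuous_map_pairedI)
      from continuous_map_compose[OF this mc] show ?thesis by (simp add: o_def)
    qed
    have "compactin T ((\<lambda>k. g a \<otimes>\<^bsub>G\<^esub> k) ` K)"
      using image_compactin[OF K cm] .
    with assms(5) obtain a0 where a0: "a0 \<in> D"
      and h: "\<forall>b\<in>D. r a0 b \<longrightarrow> g b \<notin> (\<lambda>k. g a \<otimes>\<^bsub>G\<^esub> k) ` K"
      unfolding net_to_infinity_def by blast
    obtain c where c: "c \<in> D" "r a c" "r a0 c" using dir(4)[OF a a0] by blast
    have "inv\<^bsub>G\<^esub> (g a) \<otimes>\<^bsub>G\<^esub> g c \<notin> K"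
    proof
      assume k: "inv\<^bsub>G\<^esub> (g a) \<otimes>\<^bsub>G\<^esub> g c \<in> K"
      have "g a \<otimes>\<^bsub>G\<^esub> (inv\<^bsub>G\<^esub> (g a) \<otimes>\<^bsub>G\<^esub> g c) = g c"
        using gc[OF a] gc[OF c(1)] grp
        by (simp add: group.inv_solve_left group.is_monoid monoid.m_assoc[symmetric]
            group.r_inv monoid.l_one group.inv_closed)
      then have "g c \<in> (\<lambda>k. g a \<otimes>\<^bsub>G\<^esub> k) ` K" using k by force
      with h c show False by blast
    qed
    with c show ?thesis by blast
  qed
  define E where "E = D \<times> {K. compactin T K}"
  define rE where "rE = (\<lambda>(a::'i, K::'g set) (b, L). r a b \<and> K \<subseteq> L)"
  define sel where "sel = (\<lambda>(a, K). SOME a'. a' \<in> D \<and> r a a' \<and> inv\<^bsub>G\<^esub> (g a) \<otimes>\<^bsub>G\<^esub> g a' \<notin> K)"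
  have sel: "sel e \<in> D \<and> r (fst e) (sel e) \<and> inv\<^bsub>G\<^esub> (g (fst e)) \<otimes>\<^bsub>G\<^esub> g (sel e) \<notin> snd e"
    if eE: "e \<in> E" for e
  proof -
    have e1: "fst e \<in> D" and e2: "compactin T (snd e)" using eE unfolding E_def by (auto simp: mem_Times_iff)
    have sel_eq: "sel e = (SOME a'. a' \<in> D \<and> r (fst e) a' \<and> inv\<^bsub>G\<^esub> (g (fst e)) \<otimes>\<^bsub>G\<^esub> g a' \<notin> snd e)"
      unfolding sel_def by (simp add: case_prod_beta)
    show ?thesis unfolding sel_eq by (rule someI_ex[OF key[OF e1 e2]])
  qed
  define n :: "'i \<times> 'g set \<Rightarrow> 'g" where "n = (\<lambda>e. g (fst e))"
  define n' where "n' = (\<lambda>e. g (sel e))"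
  have "directed_set E rE"
    unfolding directed_set_def
  proof (intro conjI ballI impI)
    show "E \<noteq> {}" using dir(1) unfolding E_def by auto
  next
    fix a assume "a \<in> E" then show "rE a a" using dir(2) unfolding E_def rE_def
      by (simp add: case_prod_beta mem_Times_iff)
  next
    fix a b c assume "a \<in> E" "b \<in> E" "c \<in> E" "rE a b" "rE b c"
    then show "rE a c" using dir(3) unfolding E_def rE_def
      by (simp add: case_prod_beta mem_Times_iff) blast
  next
    fix a b assume ab: "a \<in> E" "b \<in> E"
    then have h: "fst a \<in> D" "fst b \<in> D" "compactin T (snd a)" "compactin T (snd b)"
      by (simp_all add: E_def mem_Times_iff)
    then obtain c where c: "c \<in> D" "r (fst a) c" "r (fst b) c" using dir(4) by blast
    have "(c, snd a \<union> snd b) \<in> E" using c h by (simp add: E_def compactin_Un)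
    moreover have "rE a (c, snd a \<union> snd b)" "rE b (c, snd a \<union> snd b)"
      using c by (simp_all add: rE_def case_prod_beta)
    ultimately show "\<exists>c\<in>E. rE a c \<and> rE b c" by blast
  qed
  moreover have "\<forall>b\<in>E. n b \<in> carrier G \<and> n' b \<in> carrier G"
  proof
    fix b assume b: "b \<in> E"
    then have "fst b \<in> D" unfolding E_def by (auto simp: mem_Times_iff)
    then show "n b \<in> carrier G \<and> n' b \<in> carrier G"
      using gc sel[OF b] unfolding n_def n'_def by blast
  qed
  moreover have "net_converges X E rE (\<lambda>b. act (n b) x) y"
    unfolding net_converges_def
  proof (intro conjI allI impI)
    show "y \<in> topspace X" using assms(7) unfolding net_converges_def by blast
    fix U assume "openin X U \<and> y \<in> U"
    then obtain a0 where a0: "a0 \<in> D" "\<forall>a\<in>D. r a0 a \<longrightarrow> act (g a) x \<in> U"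
      using assms(7) unfolding net_converges_def by blast
    show "\<exists>a0\<in>E. \<forall>a\<in>E. rE a0 a \<longrightarrow> act (n a) x \<in> U"
      using a0 unfolding E_def rE_def n_def by (auto intro!: bexI[of _ "(a0, {})"])
  qed
  moreover have "net_converges X E rE (\<lambda>b. act (n' b) x) y"
    unfolding net_converges_def
  proof (intro conjI allI impI)
    show "y \<in> topspace X" using assms(7) unfolding net_converges_def by blast
    fix U assume "openin X U \<and> y \<in> U"
    then obtain a0 where a0: "a0 \<in> D" "\<forall>a\<in>D. r a0 a \<longrightarrow> act (g a) x \<in> U"
      using assms(7) unfolding net_converges_def by blast
    have "\<forall>e\<in>E. rE (a0, {}) e \<longrightarrow> act (n' e) x \<in> U"
    proof (intro ballI impI)
      fix e assume e: "e \<in> E" "rE (a0, {}) e"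
      then have "r a0 (fst e)" "fst e \<in> D" unfolding rE_def E_def by (cases e; auto)+
      with sel[OF e(1)] have "r a0 (sel e)" using dir(3) a0(1) by blast
      then show "act (n' e) x \<in> U" using a0 sel[OF e(1)] unfolding n'_def by blast
    qed
    moreover have "(a0, {}) \<in> E" using a0 unfolding E_def by auto
    ultimately show "\<exists>a0\<in>E. \<forall>a\<in>E. rE a0 a \<longrightarrow> act (n' a) x \<in> U" by blast
  qed
  moreover have "net_to_infinity T E rE (\<lambda>b. inv\<^bsub>G\<^esub> (n b) \<otimes>\<^bsub>G\<^esub> n' b)"
    unfolding net_to_infinity_def
  proof (intro allI impI)
    fix K assume K: "compactin T K"
    obtain d where d: "d \<in> D" using dir(1) by blast
    have "\<forall>e\<in>E. rE (d, K) e \<longrightarrow> inv\<^bsub>G\<^esub> (n e) \<otimes>\<^bsub>G\<^esub> n' e \<notin> K"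
    proof (intro ballI impI)
      fix e assume e: "e \<in> E" "rE (d, K) e"
      then have "K \<subseteq> snd e" unfolding rE_def by (cases e) auto
      then show "inv\<^bsub>G\<^esub> (n e) \<otimes>\<^bsub>G\<^esub> n' e \<notin> K" using sel[OF e(1)] unfolding n_def n'_def by blast
    qed
    moreover have "(d, K) \<in> E" using d K unfolding E_def by auto
    ultimately show "\<exists>a0\<in>E. \<forall>a\<in>E. rE a0 a \<longrightarrow> inv\<^bsub>G\<^esub> (n a) \<otimes>\<^bsub>G\<^esub> n' a \<notin> K" by blast
  qed
  ultimately show ?thesis by blast
qed

end
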